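(* Let $b \geq 2$ be an integer and let $p$ be a prime number such that $p$ divides $b+1$. Then every extra-special $p$-group $G$ of order $p^{2b+1}$ admits a diagonal double Kodaira structure of strong type $(b,\,p)$.
   Context: Notation: for elements $x,y$ of a group, $[x,y]=xyx^{-1}y^{-1}$; $o(x)$ is the order of $x$; $\langle x_1,\dots,x_m\rangle$ is the subgroup generated. Definition (diagonal double Kodaira structure). Let $G$ be a finite group and $b,n\ge 2$ integers. A diagonal double Kodaira structure of type $(b,n)$ on $G$ is a set of $4b+1$ elements $\mathsf{r}_{11},\mathsf{t}_{11},\dots,\mathsf{r}_{1b},\mathsf{t}_{1b},\mathsf{r}_{21},\mathsf{t}_{21},\dots,\mathsf{r}_{2b},\mathsf{t}_{2b},\mathsf{z}$ which generate $G$, with $o(\mathsf{z})=n$, satisfying the following relations for all $j,k\in\{1,\dots,b\}$: (Surface relations) $[\mathsf{r}_{1b}^{-1},\mathsf{t}_{1b}^{-1}]\,\mathsf{t}_{1b}^{-1}\,[\mathsf{r}_{1,b-1}^{-1},\mathsf{t}_{1,b-1}^{-1}]\,\mathsf{t}_{1,b-1}^{-1}\cdots[\mathsf{r}_{11}^{-1},\mathsf{t}_{11}^{-1}]\,\mathsf{t}_{11}^{-1}\,(\mathsf{t}_{11}\mathsf{t}_{12}\cdots\mathsf{t}_{1b})=\mathsf{z}$, $[\mathsf{r}_{21}^{-1},\mathsf{t}_{21}]\,\mathsf{t}_{21}\,[\mathsf{r}_{22}^{-1},\mathsf{t}_{22}]\,\mathsf{t}_{22}\cdots[\mathsf{r}_{2b}^{-1},\mathsf{t}_{2b}]\,\mathsf{t}_{2b}\,(\mathsf{t}_{2b}^{-1}\mathsf{t}_{2,b-1}^{-1}\cdots\mathsf{t}_{21}^{-1})=\mathsf{z}^{-1}$.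 (Action of $\mathsf{r}_{1j}$) $[\mathsf{r}_{1j},\mathsf{r}_{2k}]=1$ if $j<k$; $[\mathsf{r}_{1j},\mathsf{r}_{2j}]=1$; $[\mathsf{r}_{1j},\mathsf{r}_{2k}]=\mathsf{z}^{-1}\mathsf{r}_{2k}\mathsf{r}_{2j}^{-1}\mathsf{z}\mathsf{r}_{2j}\mathsf{r}_{2k}^{-1}$ if $j>k$; $[\mathsf{r}_{1j},\mathsf{t}_{2k}]=1$ if $j<k$; $[\mathsf{r}_{1j},\mathsf{t}_{2j}]=\mathsf{z}^{-1}$; $[\mathsf{r}_{1j},\mathsf{t}_{2k}]=[\mathsf{z}^{-1},\mathsf{t}_{2k}]$ if $j>k$; $[\mathsf{r}_{1j},\mathsf{z}]=[\mathsf{r}_{2j}^{-1},\mathsf{z}]$. (Action of $\mathsf{t}_{1j}$) $[\mathsf{t}_{1j},\mathsf{r}_{2k}]=1$ if $j<k$; $[\mathsf{t}_{1j},\mathsf{r}_{2j}]=\mathsf{t}_{2j}^{-1}\mathsf{z}\mathsf{t}_{2j}$; $[\mathsf{t}_{1j},\mathsf{r}_{2k}]=[\mathsf{t}_{2j}^{-1},\mathsf{z}]$ if $j>k$; $[\mathsf{t}_{1j},\mathsf{t}_{2k}]=1$ if $j<k$; $[\mathsf{t}_{1j},\mathsf{t}_{2j}]=[\mathsf{t}_{2j}^{-1},\mathsf{z}]$; $[\mathsf{t}_{1j},\mathsf{t}_{2k}]=\mathsf{t}_{2j}^{-1}\mathsf{z}\mathsf{t}_{2j}\mathsf{z}^{-1}\mathsf{t}_{2k}\mathsf{z}\mathsf{t}_{2j}^{-1}\mathsf{z}^{-1}\mathsf{t}_{2j}\mathsf{t}_{2k}^{-1}$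 if $j>k$; $[\mathsf{t}_{1j},\mathsf{z}]=[\mathsf{t}_{2j}^{-1},\mathsf{z}]$. Such a structure is of strong type $(b,n)$ if both $K_1:=\langle \mathsf{r}_{11},\mathsf{t}_{11},\dots,\mathsf{r}_{1b},\mathsf{t}_{1b},\mathsf{z}\rangle$ and $K_2:=\langle \mathsf{r}_{21},\mathsf{t}_{21},\dots,\mathsf{r}_{2b},\mathsf{t}_{2b},\mathsf{z}\rangle$ equal $G$, and of non-strong type otherwise. Definition. For a prime $p$, a finite $p$-group $G$ is extra-special if its center $Z(G)$ is cyclic of order $p$ and $G/Z(G)$ is a non-trivial elementary abelian $p$-group. *)

theory Defs
  imports "HOL-Algebra.Algebra"
begin

definition gcomm :: "('a, 'b) monoid_scheme \<Rightarrow> 'a \<Rightarrow> 'a \<Rightarrow> 'a" where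
  "gcomm G x y = x \<otimes>\<^bsub>G\<^esub> y \<otimes>\<^bsub>G\<^esub> inv\<^bsub>G\<^esub> x \<otimes>\<^bsub>G\<^esub> inv\<^bsub>G\<^esub> y"

definition gprod :: "('a, 'b) monoid_scheme \<Rightarrow> 'a list \<Rightarrow> 'a" where
  "gprod G xs = foldr (\<lambda>x y. x \<otimes>\<^bsub>G\<^esub> y) xs \<one>\<^bsub>G\<^esub>"

definition group_center :: "('a, 'b) monoid_scheme \<Rightarrow> 'a set" where
  "group_center G = {z \<in> carrier G. \<forall>x \<in> carrier G. z \<otimes>\<^bsub>G\<^esub> x = x \<otimes>\<^bsub>G\<^esub> z}"

definition extra_special :: "('a, 'b) monoid_scheme \<Rightarrow> nat \<Rightarrow> bool" where
  "extra_special G p \<longleftrightarrow>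
     group G \<and> Factorial_Ring.prime p \<and> finite (carrier G) \<and> (\<exists>k. order G = p ^ k) \<and>
     (\<exists>g \<in> group_center G. generate G {g} = group_center G) \<and>
     card (group_center G) = p \<and>
     (let Q = G Mod group_center G in
     comm_group Q \<and>
     (\<forall>C \<in> carrier Q.
        C [^]\<^bsub>Q\<^esub> p = \<one>\<^bsub>Q\<^esub>) \<and>
     carrier Q \<noteq> {\<one>\<^bsub>Q\<^esub>})"

(* diagonal double Kodaira structure of type (b,n): the elements r_{1j}, t_{1j},
   r_{2j}, t_{2j} are given by functions r1 t1 r2 t2 on indices j in {1..b}. *)
definition ddks :: "('a, 'b) monoid_scheme \<Rightarrow> nat \<Rightarrow> nat \<Rightarrow>
     (nat \<Rightarrow> 'a) \<Rightarrow> (nat \<Rightarrow> 'a) \<Rightarrow> (nat \<Rightarrow> 'a) \<Rightarrow> (nat \<Rightarrow> 'a) \<Rightarrow> 'a \<Rightarrow> bool" where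
  "ddks G b n r1 t1 r2 t2 z \<longleftrightarrow>
     (let m = (\<lambda>x y. x \<otimes>\<^bsub>G\<^esub> y); i = m_inv G; c = gcomm G in
     b \<ge> 2 \<and> n \<ge> 2 \<and>
     (\<forall>j \<in> {1..b}. r1 j \<in> carrier G \<and> t1 j \<in> carrier G \<and> r2 j \<in> carrier G \<and> t2 j \<in> carrier G) \<and>
     z \<in> carrier G \<and>
     generate G (r1 ` {1..b} \<union> t1 ` {1..b} \<union> r2 ` {1..b} \<union> t2 ` {1..b} \<union> {z}) = carrier G \<and>
     group.ord G z = n \<and>
     \<comment> \<open>surface relations\<close>
     m (gprod G (map (\<lambda>j. m (c (i (r1 j)) (i (t1 j))) (i (t1 j))) (rev [1..<b+1])))
       (gprod G (map t1 [1..<b+1])) = z \<and>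
     m (gprod G (map (\<lambda>j. m (c (i (r2 j)) (t2 j)) (t2 j)) [1..<b+1]))
       (gprod G (map (\<lambda>j. i (t2 j)) (rev [1..<b+1]))) = i z \<and>
     (\<forall>j \<in> {1..b}. \<forall>k \<in> {1..b}.
        \<comment> \<open>action of r_{1j}\<close>
        (j < k \<longrightarrow> c (r1 j) (r2 k) = \<one>\<^bsub>G\<^esub>) \<and>
        (j = k \<longrightarrow> c (r1 j) (r2 j) = \<one>\<^bsub>G\<^esub>) \<and>
        (j > k \<longrightarrow> c (r1 j) (r2 k) = m (m (m (m (m (i z) (r2 k)) (i (r2 j))) z) (r2 j)) (i (r2 k))) \<and>
        (j < k \<longrightarrow> c (r1 j) (t2 k) = \<one>\<^bsub>G\<^esub>) \<and>
        (j = k \<longrightarrow> c (r1 j) (t2 j) = i z) \<and>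
        (j > k \<longrightarrow> c (r1 j) (t2 k) = c (i z) (t2 k)) \<and>
        c (r1 j) z = c (i (r2 j)) z \<and>
        \<comment> \<open>action of t_{1j}\<close>
        (j < k \<longrightarrow> c (t1 j) (r2 k) = \<one>\<^bsub>G\<^esub>) \<and>
        (j = k \<longrightarrow> c (t1 j) (r2 j) = m (m (i (t2 j)) z) (t2 j)) \<and>
        (j > k \<longrightarrow> c (t1 j) (r2 k) = c (i (t2 j)) z) \<and>
        (j < k \<longrightarrow> c (t1 j) (t2 k) = \<one>\<^bsub>G\<^esub>) \<and>
        (j = k \<longrightarrow> c (t1 j) (t2 j) = c (i (t2 j)) z) \<and>
        (j > k \<longrightarrow> c (t1 j) (t2 k) =
           gprod G [i (t2 j), z, t2 j, i z, t2 k, z, i (t2 j), i z, t2 j, i (t2 k)]) \<and>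
        c (t1 j) z = c (i (t2 j)) z))"

(* strong type: K1 and K2 both equal G *)
definition ddks_strong :: "('a, 'b) monoid_scheme \<Rightarrow> nat \<Rightarrow> nat \<Rightarrow>
     (nat \<Rightarrow> 'a) \<Rightarrow> (nat \<Rightarrow> 'a) \<Rightarrow> (nat \<Rightarrow> 'a) \<Rightarrow> (nat \<Rightarrow> 'a) \<Rightarrow> 'a \<Rightarrow> bool" where
  "ddks_strong G b n r1 t1 r2 t2 z \<longleftrightarrow>
     ddks G b n r1 t1 r2 t2 z \<and>
     generate G (r1 ` {1..b} \<union> t1 ` {1..b} \<union> {z}) = carrier G \<and>
     generate G (r2 ` {1..b} \<union> t2 ` {1..b} \<union> {z}) = carrier G"

end

theory Submission
  imports Defs
begin


lemma (in group) canc1 [simp]: "x \<in> carrier G \<Longrightarrow> y \<in> carrier G \<Longrightarrow> x \<otimes> (inv x \<otimes> y) = y"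
  by (simp add: m_assoc [symmetric])
lemma (in group) canc2 [simp]: "x \<in> carrier G \<Longrightarrow> y \<in> carrier G \<Longrightarrow> inv x \<otimes> (x \<otimes> y) = y"
  by (simp add: m_assoc [symmetric])

lemma (in group) gcomm_closed [simp]: "a \<in> carrier G \<Longrightarrow> b \<in> carrier G \<Longrightarrow> gcomm G a b \<in> carrier G"
  by (simp add: gcomm_def)

lemma (in group) gcomm_one_iff: "a \<in> carrier G \<Longrightarrow> b \<in> carrier G \<Longrightarrow> gcomm G a b = \<one> \<longleftrightarrow> a \<otimes> b = b \<otimes> a"
proof -
  assume a: "a \<in> carrier G" and b: "b \<in> carrier G"
  have "gcomm G a b = (a \<otimes> b) \<otimes> inv (b \<otimes> a)"
    using a b by (simp add: gcomm_def inv_mult_group m_assoc)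
  then show ?thesis using a b
    by (metis inv_solve_right' l_one m_closed one_closed)
qed

lemma (in group) gcomm_mult_left_gen: "a \<in> carrier G \<Longrightarrow> b \<in> carrier G \<Longrightarrow> c \<in> carrier G \<Longrightarrow>
  gcomm G (a \<otimes> b) c = a \<otimes> gcomm G b c \<otimes> inv a \<otimes> gcomm G a c"
  by (simp add: gcomm_def inv_mult_group m_assoc)

lemma (in group) gcomm_mult_right_gen: "a \<in> carrier G \<Longrightarrow> b \<in> carrier G \<Longrightarrow> c \<in> carrier G \<Longrightarrow>
  gcomm G a (b \<otimes> c) = gcomm G a b \<otimes> (b \<otimes> gcomm G a c \<otimes> inv b)"
  by (simp add: gcomm_def inv_mult_group m_assoc)

definition cent :: "('a, 'b) monoid_scheme \<Rightarrow> 'a set \<Rightarrow> 'a set" where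
  "cent G S = {g \<in> carrier G. \<forall>s\<in>S. g \<otimes>\<^bsub>G\<^esub> s = s \<otimes>\<^bsub>G\<^esub> g}"

lemma (in group) cent_subgroup:
  assumes "S \<subseteq> carrier G" shows "subgroup (cent G S) G"
proof (rule subgroupI)
  show "cent G S \<subseteq> carrier G" by (auto simp: cent_def)
  show "cent G S \<noteq> {}" using assms by (auto simp: cent_def intro!: exI[of _ \<one>])
next
  fix a assume a: "a \<in> cent G S"
  have ac: "a \<in> carrier G" using a by (auto simp: cent_def)
  { fix s assume s: "s \<in> S"
    have sc: "s \<in> carrier G" using s assms by auto
    have e: "a \<otimes> s = s \<otimes> a" using a s by (auto simp: cent_def)
    have "inv a \<otimes> s = inv a \<otimes> (s \<otimes> a) \<otimes> inv a" using ac sc by (simp add: m_assoc)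
    also have "\<dots> = inv a \<otimes> (a \<otimes> s) \<otimes> inv a" using e by simp
    also have "\<dots> = s \<otimes> inv a" using ac sc by (simp add: m_assoc [symmetric])
    finally have "inv a \<otimes> s = s \<otimes> inv a" . }
  then show "inv a \<in> cent G S" using ac by (auto simp: cent_def)
next
  fix a b assume a: "a \<in> cent G S" and b: "b \<in> cent G S"
  have ac: "a \<in> carrier G" and bc: "b \<in> carrier G" using a b by (auto simp: cent_def)
  { fix s assume s: "s \<in> S"
    have sc: "s \<in> carrier G" using s assms by auto
    have e1: "a \<otimes> s = s \<otimes> a" and e2: "b \<otimes> s = s \<otimes> b" using a b s by (auto simp: cent_def)
    have "a \<otimes> b \<otimes> s = a \<otimes> (s \<otimes> b)" using ac bc sc e2 by (simp add: m_assoc)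
    also have "\<dots> = s \<otimes> a \<otimes> b" using ac bc sc e1 by (simp add: m_assoc [symmetric])
    finally have "a \<otimes> b \<otimes> s = s \<otimes> (a \<otimes> b)" using ac bc sc by (simp add: m_assoc) }
  then show "a \<otimes> b \<in> cent G S" using ac bc by (auto simp: cent_def)
qed

lemma cent_anti: "S \<subseteq> T \<Longrightarrow> cent G T \<subseteq> cent G S"
  by (auto simp: cent_def)

locale ccg = group G for G (structure) +
  fixes z :: 'a and p :: nat
  assumes z_car: "z \<in> carrier G"
  and z_cent: "\<And>g. g \<in> carrier G \<Longrightarrow> z \<otimes> g = g \<otimes> z"
  and ord_z: "ord z = p"
  and p_prime: "Factorial_Ring.prime p"
  and comm_in: "\<And>a b. a \<in> carrier G \<Longrightarrow> b \<in> carrier G \<Longrightarrow> gcomm G a b \<in> generate G {z}"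
  and center_in: "\<And>g. g \<in> carrier G \<Longrightarrow> (\<forall>h\<in>carrier G. g \<otimes> h = h \<otimes> g) \<Longrightarrow> g \<in> generate G {z}"
  and fin: "finite (carrier G)"
begin

lemma p2: "p \<ge> 2" using p_prime prime_ge_2_nat by blast

lemma zpow_cent: "g \<in> carrier G \<Longrightarrow> z [^] (k::nat) \<otimes> g = g \<otimes> z [^] k"
proof (induction k)
  case 0 then show ?case by simp
next
  case (Suc k)
  have "z [^] Suc k \<otimes> g = z [^] k \<otimes> (z \<otimes> g)" using Suc z_car by (simp add: m_assoc)
  also have "\<dots> = z [^] k \<otimes> (g \<otimes> z)" using Suc z_cent by simp
  also have "\<dots> = (z [^] k \<otimes> g) \<otimes> z" using Suc.prems z_car by (simp add: m_assoc)
  also have "\<dots> = (g \<otimes> z [^] k) \<otimes> z" using Suc by simp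
  also have "\<dots> = g \<otimes> z [^] Suc k" using Suc.prems z_car by (simp add: m_assoc)
  finally show ?case .
qed

lemma zpow_mod: "z [^] (n::nat) = z [^] (n mod p)"
proof -
  have "z [^] n = z [^] (p * (n div p) + n mod p)" by simp
  also have "\<dots> = z [^] (p * (n div p)) \<otimes> z [^] (n mod p)"
    using z_car by (simp add: nat_pow_mult)
  also have "\<dots> = (z [^] p) [^] (n div p) \<otimes> z [^] (n mod p)"
    using z_car by (simp add: nat_pow_pow)
  also have "\<dots> = z [^] (n mod p)" using z_car pow_ord_eq_1[OF z_car] ord_z by simp
  finally show ?thesis .
qed

lemma zpow_inj: "a < p \<Longrightarrow> b < p \<Longrightarrow> z [^] (a::nat) = z [^] (b::nat) \<Longrightarrow> a = b"
  using ord_inj[OF z_car] ord_z p2 unfolding inj_on_def by force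

lemma gen_z: "generate G {z} = {z [^] k | k. k < p}"
proof -
  have "generate G {z} = {z [^] k | k. k \<in> (UNIV :: nat set)}"
    using generate_pow_nat[OF z_car] ord_z p2 by simp
  also have "\<dots> = {z [^] k | k. k < p}"
    using zpow_mod p2 by (auto intro: exI[of _ "_ mod p"])
  finally show ?thesis .
qed

lemma comm_exp: "a \<in> carrier G \<Longrightarrow> b \<in> carrier G \<Longrightarrow> \<exists>k<p. gcomm G a b = z [^] k"
  using comm_in gen_z by blast

lemma comm_cent: "a \<in> carrier G \<Longrightarrow> b \<in> carrier G \<Longrightarrow> g \<in> carrier G \<Longrightarrow> gcomm G a b \<otimes> g = g \<otimes> gcomm G a b"
  using comm_exp zpow_cent by metis

lemma comm_mult_left: assumes "a \<in> carrier G" "b \<in> carrier G" "c \<in> carrier G"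
  shows "gcomm G (a \<otimes> b) c = gcomm G b c \<otimes> gcomm G a c"
proof -
  have "a \<otimes> gcomm G b c \<otimes> inv a = gcomm G b c \<otimes> a \<otimes> inv a"
    using assms comm_cent by simp
  also have "\<dots> = gcomm G b c" using assms by (simp add: m_assoc)
  finally show ?thesis using gcomm_mult_left_gen[OF assms] by simp
qed

lemma comm_mult_right: assumes "a \<in> carrier G" "b \<in> carrier G" "c \<in> carrier G"
  shows "gcomm G a (b \<otimes> c) = gcomm G a b \<otimes> gcomm G a c"
proof -
  have "b \<otimes> gcomm G a c \<otimes> inv b = gcomm G a c \<otimes> b \<otimes> inv b"
    using assms comm_cent by simp
  also have "\<dots> = gcomm G a c" using assms by (simp add: m_assoc)
  finally show ?thesis using gcomm_mult_right_gen[OF assms] by simp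
qed

lemma comm_self [simp]: "a \<in> carrier G \<Longrightarrow> gcomm G a a = \<one>"
  by (simp add: gcomm_one_iff)

lemma comm_one_l [simp]: "b \<in> carrier G \<Longrightarrow> gcomm G \<one> b = \<one>"
  by (simp add: gcomm_one_iff)

lemma comm_one_r [simp]: "b \<in> carrier G \<Longrightarrow> gcomm G b \<one> = \<one>"
  by (simp add: gcomm_one_iff)

lemma comm_pow_left: "a \<in> carrier G \<Longrightarrow> b \<in> carrier G \<Longrightarrow> gcomm G (a [^] (n::nat)) b = gcomm G a b [^] n"
proof (induction n)
  case 0 then show ?case by simp
next
  case (Suc n)
  then show ?case by (simp add: comm_mult_left) (metis nat_pow_Suc nat_pow_Suc2 gcomm_closed)
qed

lemma comm_pow_right: "a \<in> carrier G \<Longrightarrow> b \<in> carrier G \<Longrightarrow> gcomm G a (b [^] (n::nat)) = gcomm G a b [^] n"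
proof (induction n)
  case 0 then show ?case by simp
next
  case (Suc n)
  then show ?case by (simp add: comm_mult_right)
qed

lemma comm_inv_left: "a \<in> carrier G \<Longrightarrow> b \<in> carrier G \<Longrightarrow> gcomm G (inv a) b = inv (gcomm G a b)"
proof -
  assume a: "a \<in> carrier G" and b: "b \<in> carrier G"
  have "gcomm G (a \<otimes> inv a) b = gcomm G (inv a) b \<otimes> gcomm G a b"
    by (rule comm_mult_left) (simp_all add: a b)
  then have "gcomm G (inv a) b \<otimes> gcomm G a b = gcomm G (a \<otimes> inv a) b" by simp
  also have "\<dots> = \<one>" using a b by simp
  finally have "gcomm G (inv a) b \<otimes> gcomm G a b = \<one>" .
  then show ?thesis using a b by (simp add: inv_equality)
qed

lemma comm_inv_right: "a \<in> carrier G \<Longrightarrow> b \<in> carrier G \<Longrightarrow> gcomm G a (inv b) = inv (gcomm G a b)"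
proof -
  assume a: "a \<in> carrier G" and b: "b \<in> carrier G"
  have "gcomm G a (inv b \<otimes> b) = gcomm G a (inv b) \<otimes> gcomm G a b"
    by (rule comm_mult_right) (simp_all add: a b)
  then have "gcomm G a (inv b) \<otimes> gcomm G a b = gcomm G a (inv b \<otimes> b)" by simp
  also have "\<dots> = \<one>" using a b by simp
  finally have "gcomm G a (inv b) \<otimes> gcomm G a b = \<one>" .
  then show ?thesis using a b by (simp add: inv_equality)
qed

lemma comm_swap: "a \<in> carrier G \<Longrightarrow> b \<in> carrier G \<Longrightarrow> gcomm G b a = inv (gcomm G a b)"
proof -
  assume a: "a \<in> carrier G" and b: "b \<in> carrier G"
  have "gcomm G b a \<otimes> gcomm G a b = \<one>"
    using a b by (simp add: gcomm_def m_assoc)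
  then show ?thesis using a b by (simp add: inv_equality)
qed

lemma z_in_cent: "S \<subseteq> carrier G \<Longrightarrow> z \<in> cent G S"
  using z_car z_cent by (force simp: cent_def)

lemma genz_in_cent: "S \<subseteq> carrier G \<Longrightarrow> generate G {z} \<subseteq> cent G S"
  using generate_subgroup_incl[OF _ cent_subgroup] z_in_cent by blast

end


lemma (in group) subgroup_pow: "subgroup H G \<Longrightarrow> x \<in> H \<Longrightarrow> x [^] (n::nat) \<in> H"
  by (induction n) (auto simp: subgroup.one_closed subgroup.m_closed)

context ccg begin

lemma wcomm:
  assumes x: "x \<in> carrier G" and y: "y \<in> carrier G" and xy: "gcomm G x y = z"
    and c: "c \<in> carrier G" and cx: "c \<otimes> x = x \<otimes> c" and cy: "c \<otimes> y = y \<otimes> c"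
  shows "gcomm G (c \<otimes> (x [^] (a::nat) \<otimes> y [^] (b::nat))) y = z [^] a"
    and "gcomm G x (c \<otimes> (x [^] a \<otimes> y [^] b)) = z [^] b"
proof -
  have c1: "gcomm G c y = \<one>" using c y cy by (simp add: gcomm_one_iff)
  have c2: "gcomm G x c = \<one>" using c x cx by (simp add: gcomm_one_iff)
  have c3: "gcomm G (y [^] b) y = \<one>" using y by (simp add: comm_pow_left)
  have c4: "gcomm G x (x [^] a) = \<one>" using x by (simp add: comm_pow_right)
  show "gcomm G (c \<otimes> (x [^] a \<otimes> y [^] b)) y = z [^] a"
    using x y c c1 c3 xy z_car by (simp add: comm_mult_left comm_pow_left)
  show "gcomm G x (c \<otimes> (x [^] a \<otimes> y [^] b)) = z [^] b"
    using x y c c2 c4 xy z_car by (simp add: comm_mult_right comm_pow_right)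
qed

lemma step:
  assumes S: "S \<subseteq> carrier G" and x: "x \<in> cent G S" and y: "y \<in> cent G S" and xy: "gcomm G x y = z"
  shows "card (cent G S) = p * p * card (cent G (insert x (insert y S)))"
    and "cent G S \<subseteq> generate G (cent G (insert x (insert y S)) \<union> {x, y})"
proof -
  define C where "C = cent G S"
  define C' where "C' = cent G (insert x (insert y S))"
  have xc: "x \<in> carrier G" and yc: "y \<in> carrier G" using x y by (auto simp: cent_def)
  have subC: "subgroup C G" unfolding C_def by (rule cent_subgroup[OF S])
  have C'C: "C' \<subseteq> C" unfolding C_def C'_def by (rule cent_anti) auto
  have C'car: "C' \<subseteq> carrier G" unfolding C'_def by (auto simp: cent_def)
  have memC': "c \<in> C' \<longleftrightarrow> c \<in> C \<and> c \<otimes> x = x \<otimes> c \<and> c \<otimes> y = y \<otimes> c" for c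
    unfolding C_def C'_def cent_def by auto
  define F where "F = (\<lambda>(a::nat, b::nat, c). c \<otimes> (x [^] a \<otimes> y [^] b))"
  define D where "D = {..<p} \<times> {..<p} \<times> C'"
  have Fin: "F d \<in> C" if dD: "d \<in> D" for d
  proof -
    obtain a b c where d: "d = (a, b, c)" and c: "c \<in> C'" using dD unfolding D_def by (cases d) auto
    have "x [^] a \<in> C" "y [^] b \<in> C" using subgroup_pow[OF subC] x y unfolding C_def by auto
    then show ?thesis using c C'C subgroup.m_closed[OF subC] unfolding F_def d by auto
  qed
  have inj: "inj_on F D"
  proof (rule inj_onI)
    fix d1 d2 assume d1: "d1 \<in> D" and d2: "d2 \<in> D" and eq: "F d1 = F d2"
    obtain a b c where e1: "d1 = (a, b, c)" and c: "c \<in> C'" and a: "a < p" and b: "b < p"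
      using d1 unfolding D_def by (cases d1) auto
    obtain a' b' c' where e2: "d2 = (a', b', c')" and c': "c' \<in> C'" and a': "a' < p" and b': "b' < p"
      using d2 unfolding D_def by (cases d2) auto
    have cc: "c \<in> carrier G" "c' \<in> carrier G" using c c' C'car by auto
    have eq': "c \<otimes> (x [^] a \<otimes> y [^] b) = c' \<otimes> (x [^] a' \<otimes> y [^] b')"
      using eq unfolding F_def e1 e2 by simp
    have "z [^] a = z [^] a'"
      using wcomm(1)[OF xc yc xy cc(1), of a b] wcomm(1)[OF xc yc xy cc(2), of a' b'] c c' memC' eq' by auto
    then have aa: "a = a'" using zpow_inj a a' by blast
    have "z [^] b = z [^] b'"
      using wcomm(2)[OF xc yc xy cc(1), of a b] wcomm(2)[OF xc yc xy cc(2), of a' b'] c c' memC' eq' by auto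
    then have bb: "b = b'" using zpow_inj b b' by blast
    have "c = c'" using eq' aa bb cc xc yc by simp
    then show "d1 = d2" using e1 e2 aa bb by simp
  qed
  have surj: "C \<subseteq> F ` D"
  proof
    fix g assume g: "g \<in> C"
    have gc: "g \<in> carrier G" using g subgroup.subset[OF subC] by auto
    obtain a where a: "a < p" and ga: "gcomm G g y = z [^] a" using comm_exp[OF gc yc] by blast
    obtain b where b: "b < p" and gb: "gcomm G x g = z [^] b" using comm_exp[OF xc gc] by blast
    define w where "w = x [^] a \<otimes> y [^] b"
    have wc: "w \<in> carrier G" unfolding w_def using xc yc by simp
    have wC: "w \<in> C" using subgroup_pow[OF subC] x y subgroup.m_closed[OF subC] unfolding C_def w_def by auto
    define c where "c = g \<otimes> inv w"
    have cc: "c \<in> carrier G" unfolding c_def using gc wc by simp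
    have cC: "c \<in> C" unfolding c_def using g wC subgroup.m_closed[OF subC] subgroup.m_inv_closed[OF subC] by auto
    have w1: "gcomm G w y = z [^] a" using wcomm(1)[OF xc yc xy one_closed, of a b] xc yc unfolding w_def by simp
    have w2: "gcomm G x w = z [^] b" using wcomm(2)[OF xc yc xy one_closed, of a b] xc yc unfolding w_def by simp
    have "gcomm G c y = gcomm G (inv w) y \<otimes> gcomm G g y" unfolding c_def using gc wc yc by (simp add: comm_mult_left)
    also have "\<dots> = \<one>" using ga w1 wc yc z_car by (simp add: comm_inv_left)
    finally have cy: "c \<otimes> y = y \<otimes> c" using cc yc by (simp add: gcomm_one_iff)
    have "gcomm G x c = gcomm G x g \<otimes> gcomm G x (inv w)" unfolding c_def using gc wc xc by (simp add: comm_mult_right)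
    also have "\<dots> = \<one>" using gb w2 wc xc z_car by (simp add: comm_inv_right)
    finally have cx: "c \<otimes> x = x \<otimes> c" using cc xc by (simp add: gcomm_one_iff)
    have cC': "c \<in> C'" using memC' cC cx cy by auto
    have "g = c \<otimes> w" unfolding c_def using gc wc by (simp add: m_assoc)
    then have "g = F (a, b, c)" unfolding F_def w_def by simp
    moreover have "(a, b, c) \<in> D" unfolding D_def using a b cC' by auto
    ultimately show "g \<in> F ` D" by blast
  qed
  have "F ` D = C" using Fin surj by blast
  then have "card C = card D" using card_image[OF inj] by simp
  also have "\<dots> = p * p * card C'" unfolding D_def by (simp add: card_cartesian_product)
  finally show "card (cent G S) = p * p * card (cent G (insert x (insert y S)))" unfolding C_def C'_def .
  show "cent G S \<subseteq> generate G (cent G (insert x (insert y S)) \<union> {x, y})"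
  proof
    fix g assume "g \<in> cent G S"
    then obtain d where d: "d \<in> D" and gd: "g = F d" using surj unfolding C_def by blast
    obtain a b c where e: "d = (a, b, c)" and c: "c \<in> C'" using d unfolding D_def by (cases d) auto
    let ?H = "generate G (C' \<union> {x, y})"
    have sH: "subgroup ?H G" using C'car xc yc by (intro generate_is_subgroup) auto
    have "c \<in> ?H" "x \<in> ?H" "y \<in> ?H" using c by (auto intro: generate.incl)
    then have "c \<otimes> (x [^] a \<otimes> y [^] b) \<in> ?H" using sH subgroup_pow[OF sH] subgroup.m_closed[OF sH] by simp
    then show "g \<in> generate G (cent G (insert x (insert y S)) \<union> {x, y})" using gd e unfolding F_def C'_def by simp
  qed
qed

end


definition PP :: "(nat \<Rightarrow> 'a) \<Rightarrow> (nat \<Rightarrow> 'a) \<Rightarrow> nat \<Rightarrow> 'a set" where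
  "PP r t m = r ` {1..m} \<union> t ` {1..m}"

definition sympl :: "('a, 'b) monoid_scheme \<Rightarrow> 'a \<Rightarrow> (nat \<Rightarrow> 'a) \<Rightarrow> (nat \<Rightarrow> 'a) \<Rightarrow> nat \<Rightarrow> bool" where
  "sympl G z r t m \<longleftrightarrow>
    (\<forall>i\<in>{1..m}. r i \<in> carrier G \<and> t i \<in> carrier G \<and> gcomm G (r i) (t i) = z) \<and>
    (\<forall>i\<in>{1..m}. \<forall>j\<in>{1..m}. r i \<otimes>\<^bsub>G\<^esub> r j = r j \<otimes>\<^bsub>G\<^esub> r i \<and> t i \<otimes>\<^bsub>G\<^esub> t j = t j \<otimes>\<^bsub>G\<^esub> t i \<and>
       (i \<noteq> j \<longrightarrow> r i \<otimes>\<^bsub>G\<^esub> t j = t j \<otimes>\<^bsub>G\<^esub> r i))"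

lemma modinv: assumes "Factorial_Ring.prime (p::nat)" "0 < k" "k < p" shows "\<exists>j. (k * j) mod p = 1"
proof -
  have "\<not> p dvd k" using assms by (auto dest: dvd_imp_le)
  then have "coprime p k" using assms(1) prime_imp_coprime by blast
  then have g: "gcd k p = 1" by (simp add: coprime_iff_gcd_eq_1 gcd.commute)
  obtain x y where "k * x = p * y + gcd k p" using bezout_nat[of k p] assms by auto
  then have "k * x = p * y + 1" using g by simp
  moreover have "p > 1" using assms prime_gt_1_nat by blast
  ultimately have "(k * x) mod p = 1"
  proof -
    assume e: "k * x = p * y + 1" and p1: "p > 1"
    have "(k * x) mod p = (1 + y * p) mod p" using e by (simp add: mult.commute)
    also have "\<dots> = 1 mod p" by (rule mod_mult_self1)
    also have "\<dots> = 1" using p1 by simp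
    finally show ?thesis .
  qed
  then show ?thesis by blast
qed

context ccg begin

lemma card_genz: "card (generate G {z}) = p"
  using generate_pow_card[OF z_car] ord_z by simp

lemma construct:
  assumes ord: "order G = p ^ (2 * b + 1)"
  shows "m \<le> b \<Longrightarrow> \<exists>r t. sympl G z r t m \<and> card (cent G (PP r t m)) * p ^ (2 * m) = order G \<and>
     carrier G \<subseteq> generate G (cent G (PP r t m) \<union> PP r t m)"
proof (induction m)
  case 0
  have "PP (\<lambda>_. \<one>) (\<lambda>_. \<one>) 0 = {}" by (simp add: PP_def)
  moreover have "cent G {} = carrier G" by (simp add: cent_def)
  ultimately show ?case
    by (intro exI[of _ "\<lambda>_. \<one>"]) (auto simp: sympl_def order_def intro: generate.incl)
next
  case (Suc m)
  then obtain r t where sy: "sympl G z r t m" and cd: "card (cent G (PP r t m)) * p ^ (2 * m) = order G"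
    and gen: "carrier G \<subseteq> generate G (cent G (PP r t m) \<union> PP r t m)" by auto
  define P where "P = PP r t m"
  define C where "C = cent G P"
  have Pc: "P \<subseteq> carrier G" using sy unfolding P_def PP_def sympl_def by auto
  have subC: "subgroup C G" unfolding C_def by (rule cent_subgroup[OF Pc])
  have Cc: "C \<subseteq> carrier G" unfolding C_def cent_def by auto
  have p0: "p > 0" using p2 by simp
  have "p ^ (2 * m) * card C = p ^ (2 * m) * p ^ (2 * b + 1 - 2 * m)"
    using cd ord Suc.prems unfolding C_def P_def by (simp add: power_add [symmetric] mult.commute)
  then have cC: "card C = p ^ (2 * b + 1 - 2 * m)" using p0 by simp
  have "p ^ 3 \<le> p ^ (2 * b + 1 - 2 * m)" using Suc.prems p0 by (intro power_increasing) auto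
  moreover have "p < p ^ 3"
  proof -
    have "1 < p ^ 2" using p2 by (intro one_less_power) auto
    then have "p * 1 < p * p ^ 2" using p0 by (intro mult_strict_left_mono) auto
    moreover have "p ^ 3 = p * p ^ 2" by (simp add: power_Suc [symmetric])
    ultimately show ?thesis by simp
  qed
  ultimately have big: "p < card C" using cC by simp
  have "\<exists>x\<in>C. \<exists>h\<in>carrier G. x \<otimes> h \<noteq> h \<otimes> x"
  proof (rule ccontr)
    assume "\<not> ?thesis"
    then have "C \<subseteq> generate G {z}" using center_in Cc by blast
    then have "card C \<le> card (generate G {z})"
      using fin generate_incl[of "{z}"] z_car by (intro card_mono) (auto intro: finite_subset)
    then show False using big card_genz by simp
  qed
  then obtain x h where xC: "x \<in> C" and hc: "h \<in> carrier G" and xh: "x \<otimes> h \<noteq> h \<otimes> x" by blast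
  have xc: "x \<in> carrier G" using xC Cc by auto
  have "\<exists>y\<in>C. x \<otimes> y \<noteq> y \<otimes> x"
  proof (rule ccontr)
    assume "\<not> ?thesis"
    then have "C \<union> P \<subseteq> cent G {x}" using xC Cc Pc unfolding C_def cent_def by auto
    then have "generate G (C \<union> P) \<subseteq> cent G {x}"
      using xc by (intro generate_subgroup_incl cent_subgroup) auto
    then have "h \<in> cent G {x}" using gen hc unfolding C_def P_def by blast
    then show False using xh unfolding cent_def by auto
  qed
  then obtain y where yC: "y \<in> C" and xy: "x \<otimes> y \<noteq> y \<otimes> x" by blast
  have yc: "y \<in> carrier G" using yC Cc by auto
  obtain k where kp: "k < p" and gk: "gcomm G x y = z [^] k" using comm_exp[OF xc yc] by blast
  have k0: "k \<noteq> 0"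
  proof
    assume "k = 0"
    then have "gcomm G x y = \<one>" using gk by simp
    then show False using xy xc yc gcomm_one_iff by blast
  qed
  obtain j where kj: "(k * j) mod p = 1" using modinv[OF p_prime _ kp] k0 by auto
  define y' where "y' = y [^] j"
  have y'C: "y' \<in> C" unfolding y'_def using subgroup_pow[OF subC yC] .
  have y'c: "y' \<in> carrier G" using y'C Cc by auto
  have xy': "gcomm G x y' = z"
  proof -
    have "gcomm G x y' = (z [^] k) [^] j" unfolding y'_def using xc yc gk by (simp add: comm_pow_right)
    also have "\<dots> = z [^] (k * j)" using z_car by (simp add: nat_pow_pow)
    also have "\<dots> = z [^] ((k * j) mod p)" by (rule zpow_mod)
    also have "\<dots> = z" using kj z_car by simp
    finally show ?thesis .
  qed
  define r' where "r' = r(Suc m := x)"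
  define t' where "t' = t(Suc m := y')"
  have ins: "{1..Suc m} = insert (Suc m) {1..m}" by auto
  have r'e: "i \<in> {1..m} \<Longrightarrow> r' i = r i" for i unfolding r'_def by auto
  have t'e: "i \<in> {1..m} \<Longrightarrow> t' i = t i" for i unfolding t'_def by auto
  have P': "PP r' t' (Suc m) = insert x (insert y' P)"
  proof -
    have "r' ` {1..Suc m} = insert x (r ` {1..m})" unfolding ins using r'e by (auto simp: r'_def)
    moreover have "t' ` {1..Suc m} = insert y' (t ` {1..m})" unfolding ins using t'e by (auto simp: t'_def)
    ultimately show ?thesis unfolding PP_def P_def by auto
  qed
  have xP: "\<forall>s\<in>P. x \<otimes> s = s \<otimes> x" using xC unfolding C_def cent_def by auto
  have yP: "\<forall>s\<in>P. y' \<otimes> s = s \<otimes> y'" using y'C unfolding C_def cent_def by auto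
  have rP: "i \<in> {1..m} \<Longrightarrow> r i \<in> P" and tP: "i \<in> {1..m} \<Longrightarrow> t i \<in> P" for i
    unfolding P_def PP_def by auto
  have syA: "\<forall>i\<in>insert (Suc m) {1..m}. r' i \<in> carrier G \<and> t' i \<in> carrier G \<and> gcomm G (r' i) (t' i) = z"
    using sy xc y'c xy' r'e t'e unfolding sympl_def by (auto simp: r'_def t'_def)
  have syB: "\<forall>i\<in>insert (Suc m) {1..m}. \<forall>j\<in>insert (Suc m) {1..m}. r' i \<otimes> r' j = r' j \<otimes> r' i \<and> t' i \<otimes> t' j = t' j \<otimes> t' i \<and> (i \<noteq> j \<longrightarrow> r' i \<otimes> t' j = t' j \<otimes> r' i)"
  proof (intro ballI)
    fix i j assume i: "i \<in> insert (Suc m) {1..m}" and j: "j \<in> insert (Suc m) {1..m}"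
    show "r' i \<otimes> r' j = r' j \<otimes> r' i \<and> t' i \<otimes> t' j = t' j \<otimes> t' i \<and> (i \<noteq> j \<longrightarrow> r' i \<otimes> t' j = t' j \<otimes> r' i)"
    proof (cases "i = Suc m")
      case True
      then show ?thesis
      proof (cases "j = Suc m")
        case True
        then show ?thesis using \<open>i = Suc m\<close> by (simp add: r'_def t'_def)
      next
        case False
        then have jm: "j \<in> {1..m}" using j by auto
        then show ?thesis using True xP yP rP[OF jm] tP[OF jm] r'e[OF jm] t'e[OF jm]
          by (simp add: r'_def t'_def)
      qed
    next
      case False
      then have im: "i \<in> {1..m}" using i by auto
      then show ?thesis
      proof (cases "j = Suc m")
        case True
        then show ?thesis using im xP yP rP[OF im] tP[OF im] r'e[OF im] t'e[OF im]
          by (simp add: r'_def t'_def)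
      next
        case False
        then have jm: "j \<in> {1..m}" using j by auto
        then show ?thesis using im sy r'e t'e unfolding sympl_def by auto
      qed
    qed
  qed
  have sy': "sympl G z r' t' (Suc m)" unfolding sympl_def ins using syA syB by blast
  have st: "card C = p * p * card (cent G (insert x (insert y' P)))"
    "C \<subseteq> generate G (cent G (insert x (insert y' P)) \<union> {x, y'})"
    using step[OF Pc xC[unfolded C_def] y'C[unfolded C_def] xy'] unfolding C_def by auto
  define C' where "C' = cent G (insert x (insert y' P))"
  have card': "card (cent G (PP r' t' (Suc m))) * p ^ (2 * Suc m) = order G"
  proof -
    have e: "p ^ (2 * Suc m) = p * p * p ^ (2 * m)" by (simp add: power_Suc)
    have "card C' * p ^ (2 * Suc m) = (p * p * card C') * p ^ (2 * m)"
      unfolding e by (simp only: mult_ac)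
    also have "\<dots> = order G" using st(1) cd unfolding C'_def C_def P_def by simp
    finally show ?thesis unfolding P' C'_def .
  qed
  have C'c: "C' \<subseteq> carrier G" unfolding C'_def cent_def by auto
  have P'c: "insert x (insert y' P) \<subseteq> carrier G" using Pc xc y'c by auto
  let ?H = "generate G (C' \<union> insert x (insert y' P))"
  have sH: "subgroup ?H G" using C'c P'c by (intro generate_is_subgroup) auto
  have "C \<subseteq> ?H"
    using st(2) mono_generate[of "C' \<union> {x, y'}" "C' \<union> insert x (insert y' P)"] unfolding C'_def by auto
  moreover have "P \<subseteq> ?H" by (auto intro: generate.incl)
  ultimately have "generate G (C \<union> P) \<subseteq> ?H" by (intro generate_subgroup_incl[OF _ sH]) auto
  then have gen': "carrier G \<subseteq> generate G (cent G (PP r' t' (Suc m)) \<union> PP r' t' (Suc m))"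
    using gen unfolding P' C'_def C_def P_def by auto
  show ?case using sy' card' gen' by blast
qed

lemma final:
  assumes ord: "order G = p ^ (2 * b + 1)"
  shows "\<exists>r t. sympl G z r t b \<and> carrier G \<subseteq> generate G (insert z (PP r t b))"
proof -
  obtain r t where sy: "sympl G z r t b" and cd: "card (cent G (PP r t b)) * p ^ (2 * b) = order G"
    and gen: "carrier G \<subseteq> generate G (cent G (PP r t b) \<union> PP r t b)"
    using construct[OF ord, of b] by auto
  define P where "P = PP r t b"
  have Pc: "P \<subseteq> carrier G" using sy unfolding P_def PP_def sympl_def by auto
  have p0: "p > 0" using p2 by simp
  have "card (cent G P) * p ^ (2 * b) = p * p ^ (2 * b)" using cd ord unfolding P_def by simp
  then have cc: "card (cent G P) = p" using p0 by simp
  have sub: "generate G {z} \<subseteq> cent G P" using genz_in_cent[OF Pc] .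
  have "finite (cent G P)" using fin by (rule finite_subset[rotated]) (auto simp: cent_def)
  then have eq: "generate G {z} = cent G P" using sub cc card_genz by (intro card_subset_eq) auto
  let ?H = "generate G (insert z P)"
  have sH: "subgroup ?H G" using Pc z_car by (intro generate_is_subgroup) auto
  have "generate G {z} \<subseteq> ?H" by (rule mono_generate) auto
  moreover have "P \<subseteq> ?H" by (auto intro: generate.incl)
  ultimately have "generate G (cent G P \<union> P) \<subseteq> ?H" using eq by (intro generate_subgroup_incl[OF _ sH]) auto
  then show ?thesis using sy gen unfolding P_def by blast
qed

end




lemma (in group) gprod_closed: "set xs \<subseteq> carrier G \<Longrightarrow> gprod G xs \<in> carrier G"
  by (induction xs) (auto simp: gprod_def)

lemma (in group) gprod_append: "set xs \<subseteq> carrier G \<Longrightarrow> set ys \<subseteq> carrier G \<Longrightarrow>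
  gprod G (xs @ ys) = gprod G xs \<otimes> gprod G ys"
proof (induction xs)
  case Nil then show ?case using gprod_closed by (simp add: gprod_def)
next
  case (Cons a xs)
  then show ?case using gprod_closed[of xs] gprod_closed[of ys] by (simp add: gprod_def m_assoc)
qed

lemma (in group) gprod_cancel:
  "(\<forall>j\<in>set xs. f j \<in> carrier G \<and> g j \<in> carrier G \<and> f j \<otimes> g j = \<one>) \<Longrightarrow>
   gprod G (map f xs) \<otimes> gprod G (map g (rev xs)) = \<one>"
proof (induction xs)
  case Nil then show ?case by (simp add: gprod_def)
next
  case (Cons a xs)
  have c1: "gprod G (map f xs) \<in> carrier G" using Cons.prems by (intro gprod_closed) auto
  have c2: "gprod G (map g (rev xs)) \<in> carrier G" using Cons.prems by (intro gprod_closed) auto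
  have ga: "g a \<in> carrier G" using Cons.prems by auto
  have "gprod G (map g (rev (a # xs))) = gprod G (map g (rev xs) @ [g a])" by simp
  also have "\<dots> = gprod G (map g (rev xs)) \<otimes> gprod G [g a]"
    using Cons.prems by (intro gprod_append) auto
  also have "\<dots> = gprod G (map g (rev xs)) \<otimes> g a" using ga by (simp add: gprod_def)
  finally have "gprod G (map g (rev (a # xs))) = gprod G (map g (rev xs)) \<otimes> g a" .
  then have "gprod G (map f (a # xs)) \<otimes> gprod G (map g (rev (a # xs))) =
     f a \<otimes> ((gprod G (map f xs) \<otimes> gprod G (map g (rev xs))) \<otimes> g a)"
    using Cons.prems c1 c2 by (simp add: gprod_def m_assoc)
  also have "\<dots> = \<one>" using Cons by simp
  finally show ?case .
qed

lemma (in group) pow_central: "w \<in> carrier G \<Longrightarrow> (\<forall>g\<in>carrier G. w \<otimes> g = g \<otimes> w) \<Longrightarrow> g \<in> carrier G \<Longrightarrow>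
   w [^] (k::nat) \<otimes> g = g \<otimes> w [^] k"
proof (induction k)
  case 0 then show ?case by simp
next
  case (Suc k)
  have w: "w \<in> carrier G" and g: "g \<in> carrier G" and wg: "w \<otimes> g = g \<otimes> w" using Suc.prems by auto
  have "w [^] Suc k \<otimes> g = w [^] k \<otimes> (w \<otimes> g)" using w g by (simp add: m_assoc)
  also have "\<dots> = w [^] k \<otimes> (g \<otimes> w)" using wg by simp
  also have "\<dots> = (w [^] k \<otimes> g) \<otimes> w" using w g by (simp add: m_assoc)
  also have "\<dots> = (g \<otimes> w [^] k) \<otimes> w" using Suc.IH Suc.prems by simp
  also have "\<dots> = g \<otimes> w [^] Suc k" using w g by (simp add: m_assoc)
  finally show ?case .
qed

lemma (in group) gprod_central:
  assumes w: "w \<in> carrier G" "\<forall>g\<in>carrier G. w \<otimes> g = g \<otimes> w"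
  shows "(\<forall>j\<in>set xs. f j \<in> carrier G) \<Longrightarrow> gprod G (map (\<lambda>j. w \<otimes> f j) xs) = w [^] length xs \<otimes> gprod G (map f xs)"
proof (induction xs)
  case Nil then show ?case by (simp add: gprod_def)
next
  case (Cons a xs)
  have c1: "gprod G (map f xs) \<in> carrier G" using Cons.prems by (intro gprod_closed) auto
  have fa: "f a \<in> carrier G" using Cons.prems by auto
  have "gprod G (map (\<lambda>j. w \<otimes> f j) (a # xs)) = w \<otimes> f a \<otimes> (w [^] length xs \<otimes> gprod G (map f xs))"
    using Cons by (simp add: gprod_def)
  also have "\<dots> = w \<otimes> (f a \<otimes> w [^] length xs) \<otimes> gprod G (map f xs)"
    using w fa c1 by (simp add: m_assoc)
  also have "\<dots> = w \<otimes> (w [^] length xs \<otimes> f a) \<otimes> gprod G (map f xs)"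
    using pow_central[OF w fa] by simp
  also have "\<dots> = w [^] length (a # xs) \<otimes> gprod G (map f (a # xs))"
    using w fa c1 by (simp add: m_assoc nat_pow_Suc2 gprod_def)
  finally show ?case .
qed

context ccg begin

lemma invz_cent: "g \<in> carrier G \<Longrightarrow> inv z \<otimes> g = g \<otimes> inv z"
proof -
  assume g: "g \<in> carrier G"
  have "inv z \<otimes> g = inv z \<otimes> (g \<otimes> z) \<otimes> inv z" using g z_car by (simp add: m_assoc)
  also have "\<dots> = inv z \<otimes> (z \<otimes> g) \<otimes> inv z" using z_cent[OF g] by simp
  also have "\<dots> = g \<otimes> inv z" using g z_car by (simp add: m_assoc [symmetric])
  finally show ?thesis .
qed

lemma comm_z1 [simp]: "g \<in> carrier G \<Longrightarrow> gcomm G g z = \<one>"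
  using z_cent z_car by (simp add: gcomm_one_iff)
lemma comm_z2 [simp]: "g \<in> carrier G \<Longrightarrow> gcomm G z g = \<one>"
  using z_cent z_car by (simp add: gcomm_one_iff)
lemma comm_z3 [simp]: "g \<in> carrier G \<Longrightarrow> gcomm G g (inv z) = \<one>"
  using z_car by (simp add: comm_inv_right)
lemma comm_z4 [simp]: "g \<in> carrier G \<Longrightarrow> gcomm G (inv z) g = \<one>"
  using z_car by (simp add: comm_inv_left)

lemma L3: "a \<in> carrier G \<Longrightarrow> b \<in> carrier G \<Longrightarrow> inv z \<otimes> a \<otimes> inv b \<otimes> z \<otimes> b \<otimes> inv a = \<one>"
proof -
  assume a: "a \<in> carrier G" and b: "b \<in> carrier G"
  have "inv z \<otimes> a \<otimes> inv b \<otimes> z = inv z \<otimes> (z \<otimes> (a \<otimes> inv b))"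
    using a b z_car z_cent[of "a \<otimes> inv b"] by (simp add: m_assoc)
  also have "\<dots> = a \<otimes> inv b" using a b z_car by simp
  finally show ?thesis using a b by (simp add: m_assoc)
qed

lemma zmove: "g \<in> carrier G \<Longrightarrow> w \<in> carrier G \<Longrightarrow> z \<otimes> (g \<otimes> w) = g \<otimes> (z \<otimes> w)"
proof -
  assume g: "g \<in> carrier G" and w: "w \<in> carrier G"
  have "z \<otimes> (g \<otimes> w) = (z \<otimes> g) \<otimes> w" using g w z_car by (simp add: m_assoc)
  also have "\<dots> = (g \<otimes> z) \<otimes> w" using z_cent[OF g] by simp
  also have "\<dots> = g \<otimes> (z \<otimes> w)" using g w z_car by (simp add: m_assoc)
  finally show ?thesis .
qed

lemma L9: "a \<in> carrier G \<Longrightarrow> a \<otimes> z \<otimes> inv a = z"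
  using z_cent[of "inv a"] z_car by (simp add: m_assoc)

lemma L13: "a \<in> carrier G \<Longrightarrow> b \<in> carrier G \<Longrightarrow> gprod G [inv a, z, a, inv z, b, z, inv a, inv z, a, inv b] = \<one>"
proof -
  assume a: "a \<in> carrier G" and b: "b \<in> carrier G"
  have zc: "z \<otimes> inv a = inv a \<otimes> z" using z_cent a by simp
  have e1: "z \<otimes> (inv a \<otimes> (inv z \<otimes> (a \<otimes> inv b))) = inv a \<otimes> (z \<otimes> (inv z \<otimes> (a \<otimes> inv b)))"
    using a b z_car by (intro zmove) auto
  have e2: "a \<otimes> inv z = inv z \<otimes> a" using invz_cent a by simp
  show ?thesis using a b z_car by (simp add: gprod_def e1 e2)
qed

lemma L13': "a \<in> carrier G \<Longrightarrow> b \<in> carrier G \<Longrightarrow> gprod G [a, z, inv a, inv z, inv b, z, a, inv z, inv a, b] = \<one>"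
  using L13[of "inv a" "inv b"] by simp

end


context ccg begin

lemma genS:
  assumes S: "S \<subseteq> carrier G" and zS: "z \<in> S" and rS: "r ` {1..b} \<subseteq> S" and tS: "(\<lambda>j. inv (t j)) ` {1..b} \<subseteq> S"
    and tc: "t ` {1..b} \<subseteq> carrier G"
    and gen: "carrier G \<subseteq> generate G (insert z (PP r t b))"
  shows "generate G S = carrier G"
proof
  show "generate G S \<subseteq> carrier G" using generate_incl[OF S] .
  have sH: "subgroup (generate G S) G" using generate_is_subgroup[OF S] .
  have "insert z (PP r t b) \<subseteq> generate G S"
  proof -
    have "z \<in> generate G S" using zS by (rule generate.incl)
    moreover have "r ` {1..b} \<subseteq> generate G S" using rS by (auto intro: generate.incl)
    moreover have "t ` {1..b} \<subseteq> generate G S"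
    proof
      fix x assume "x \<in> t ` {1..b}"
      then obtain j where j: "j \<in> {1..b}" and x: "x = t j" by auto
      have "inv (inv (t j)) \<in> generate G S" using tS j by (intro generate.inv) auto
      moreover have "t j \<in> carrier G" using tc j by auto
      ultimately show "x \<in> generate G S" using x by simp
    qed
    ultimately show ?thesis unfolding PP_def by auto
  qed
  then have "generate G (insert z (PP r t b)) \<subseteq> generate G S" by (rule generate_subgroup_incl[OF _ sH])
  then show "carrier G \<subseteq> generate G S" using gen by auto
qed

lemma verify:
  assumes b2: "b \<ge> 2" and dvd: "p dvd b + 1" and sy: "sympl G z r t b"
    and gen: "carrier G \<subseteq> generate G (insert z (PP r t b))"
  shows "ddks_strong G b p r (\<lambda>j. inv (t j)) r (\<lambda>j. inv (t j)) z"
proof -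
  have rc: "\<And>j. j \<in> {1..b} \<Longrightarrow> r j \<in> carrier G" and tc: "\<And>j. j \<in> {1..b} \<Longrightarrow> t j \<in> carrier G"
    and rt: "\<And>j. j \<in> {1..b} \<Longrightarrow> gcomm G (r j) (t j) = z"
    using sy unfolding sympl_def by auto
  have rr: "\<And>j k. j \<in> {1..b} \<Longrightarrow> k \<in> {1..b} \<Longrightarrow> r j \<otimes> r k = r k \<otimes> r j"
    and tt: "\<And>j k. j \<in> {1..b} \<Longrightarrow> k \<in> {1..b} \<Longrightarrow> t j \<otimes> t k = t k \<otimes> t j"
    and rtk: "\<And>j k. j \<in> {1..b} \<Longrightarrow> k \<in> {1..b} \<Longrightarrow> j \<noteq> k \<Longrightarrow> r j \<otimes> t k = t k \<otimes> r j"
    using sy unfolding sympl_def by auto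
  have zb1: "z [^] b \<otimes> z = \<one>"
  proof -
    have "z [^] (b + 1) = \<one>" using pow_eq_id[OF z_car, of "b + 1"] ord_z dvd by simp
    then show ?thesis using z_car by simp
  qed
  have zb2: "z \<otimes> z [^] b = \<one>" using zb1 z_car by (simp add: inv_comm)
  have izb: "inv z = z [^] b" using inv_equality[OF zb1] z_car by simp
  have izb2: "inv (z [^] b) = z" using inv_equality[OF zb2] z_car by simp
  have p2': "p \<ge> 2" using p2 .
  define xs where "xs = [1..<b+1]"
  have xsB: "set xs = {1..b}" unfolding xs_def by auto
  have lxs: "length xs = b" unfolding xs_def by simp
  have invzc: "\<forall>g\<in>carrier G. inv z \<otimes> g = g \<otimes> inv z" using invz_cent by auto
  have zc': "\<forall>g\<in>carrier G. z \<otimes> g = g \<otimes> z" using z_cent by auto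
  have s1: "gprod G (map (\<lambda>j. gcomm G (inv (r j)) (inv (inv (t j))) \<otimes> inv (inv (t j))) (rev xs)) \<otimes>
      gprod G (map (\<lambda>j. inv (t j)) xs) = z"
  proof -
    have e: "map (\<lambda>j. gcomm G (inv (r j)) (inv (inv (t j))) \<otimes> inv (inv (t j))) (rev xs) = map (\<lambda>j. inv z \<otimes> t j) (rev xs)"
      using rc tc rt xsB by (auto simp: comm_inv_left)
    have "gprod G (map (\<lambda>j. inv z \<otimes> t j) (rev xs)) = inv z [^] length (rev xs) \<otimes> gprod G (map t (rev xs))"
      using z_car invzc tc xsB by (intro gprod_central) auto
    moreover have "gprod G (map t (rev xs)) \<otimes> gprod G (map (\<lambda>j. inv (t j)) (rev (rev xs))) = \<one>"
      using tc xsB by (intro gprod_cancel) auto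
    moreover have "gprod G (map t (rev xs)) \<in> carrier G" "gprod G (map (\<lambda>j. inv (t j)) xs) \<in> carrier G"
      using tc xsB by (auto intro!: gprod_closed)
    ultimately show ?thesis unfolding e using lxs z_car izb2
      by (simp add: m_assoc nat_pow_inv)
  qed
  have s2: "gprod G (map (\<lambda>j. gcomm G (inv (r j)) (inv (t j)) \<otimes> inv (t j)) xs) \<otimes>
      gprod G (map (\<lambda>j. inv (inv (t j))) (rev xs)) = inv z"
  proof -
    have e: "map (\<lambda>j. gcomm G (inv (r j)) (inv (t j)) \<otimes> inv (t j)) xs = map (\<lambda>j. z \<otimes> inv (t j)) xs"
      using rc tc rt xsB z_car by (auto simp: comm_inv_left comm_inv_right)
    have "gprod G (map (\<lambda>j. z \<otimes> inv (t j)) xs) = z [^] length xs \<otimes> gprod G (map (\<lambda>j. inv (t j)) xs)"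
      using z_car zc' tc xsB by (intro gprod_central) auto
    moreover have "gprod G (map (\<lambda>j. inv (t j)) xs) \<otimes> gprod G (map (\<lambda>j. inv (inv (t j))) (rev xs)) = \<one>"
      using tc xsB by (intro gprod_cancel) auto
    moreover have "gprod G (map (\<lambda>j. inv (t j)) xs) \<in> carrier G" "gprod G (map (\<lambda>j. inv (inv (t j))) (rev xs)) \<in> carrier G"
      using tc xsB by (auto intro!: gprod_closed)
    ultimately show ?thesis unfolding e using lxs z_car izb
      by (simp add: m_assoc)
  qed
  have act: "(j < k \<longrightarrow> gcomm G (r j) (r k) = \<one>) \<and>
 (j = k \<longrightarrow> gcomm G (r j) (r j) = \<one>) \<and>
 (k < j \<longrightarrow> gcomm G (r j) (r k) = inv z \<otimes> r k \<otimes> inv (r j) \<otimes> z \<otimes> r j \<otimes> inv (r k)) \<and>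
 (j < k \<longrightarrow> gcomm G (r j) (inv (t k)) = \<one>) \<and>
 (j = k \<longrightarrow> gcomm G (r j) (inv (t j)) = inv z) \<and>
 (k < j \<longrightarrow> gcomm G (r j) (inv (t k)) = gcomm G (inv z) (inv (t k))) \<and>
 gcomm G (r j) z = gcomm G (inv (r j)) z \<and>
 (j < k \<longrightarrow> gcomm G (inv (t j)) (r k) = \<one>) \<and>
 (j = k \<longrightarrow> gcomm G (inv (t j)) (r j) = inv (inv (t j)) \<otimes> z \<otimes> inv (t j)) \<and>
 (k < j \<longrightarrow> gcomm G (inv (t j)) (r k) = gcomm G (inv (inv (t j))) z) \<and>
 (j < k \<longrightarrow> gcomm G (inv (t j)) (inv (t k)) = \<one>) \<and>
 (j = k \<longrightarrow> gcomm G (inv (t j)) (inv (t j)) = gcomm G (inv (inv (t j))) z) \<and>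
 (k < j \<longrightarrow> gcomm G (inv (t j)) (inv (t k)) = gprod G [inv (inv (t j)), z, inv (t j), inv z, inv (t k), z, inv (inv (t j)), inv z, inv (t j), inv (inv (t k))]) \<and>
 gcomm G (inv (t j)) z = gcomm G (inv (inv (t j))) z"
    if j: "j \<in> {1..b}" and k: "k \<in> {1..b}" for j k
  proof -
    have c: "r j \<in> carrier G" "r k \<in> carrier G" "t j \<in> carrier G" "t k \<in> carrier G"
      using rc tc j k by auto
    have f1: "gcomm G (r j) (r k) = \<one>" using rr[OF j k] c by (simp add: gcomm_one_iff)
    have f2: "gcomm G (t j) (t k) = \<one>" using tt[OF j k] c by (simp add: gcomm_one_iff)
    have f3: "j \<noteq> k \<Longrightarrow> gcomm G (r j) (t k) = \<one>" using rtk[OF j k] c by (simp add: gcomm_one_iff)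
    have f4: "j \<noteq> k \<Longrightarrow> gcomm G (t j) (r k) = \<one>" using rtk[OF k j] c by (simp add: gcomm_one_iff)
    have f5: "gcomm G (r j) (t j) = z" using rt[OF j] .
    have f6: "gcomm G (t j) (r j) = inv z" using comm_swap[of "r j" "t j"] f5 c by simp
    show ?thesis
    proof (cases "j = k")
      case True
      then show ?thesis
        using c z_car f1 f2 f5 f6 L9[of "t j"]
        by (simp add: comm_inv_left comm_inv_right)
    next
      case False
      then show ?thesis
        using c z_car f1 f2 f3 f4 L3[of "r k" "r j"] L13'[of "t j" "t k"]
        by (simp add: comm_inv_left comm_inv_right)
    qed
  qed
  show ?thesis
    unfolding ddks_strong_def ddks_def Let_def
  proof (intro conjI)
    show "2 \<le> b" by fact
    show "2 \<le> p" by fact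
    show "\<forall>j\<in>{1..b}. r j \<in> carrier G \<and> inv (t j) \<in> carrier G \<and> r j \<in> carrier G \<and> inv (t j) \<in> carrier G"
      using rc tc by auto
    show "z \<in> carrier G" by (rule z_car)
    show "group.ord G z = p" using ord_z .
    show "generate G (r ` {1..b} \<union> (\<lambda>j. inv (t j)) ` {1..b} \<union> r ` {1..b} \<union> (\<lambda>j. inv (t j)) ` {1..b} \<union> {z}) = carrier G"
      using rc tc gen z_car by (intro genS) auto
    show "generate G (r ` {1..b} \<union> (\<lambda>j. inv (t j)) ` {1..b} \<union> {z}) = carrier G"
      using rc tc gen z_car by (intro genS) auto
    show "generate G (r ` {1..b} \<union> (\<lambda>j. inv (t j)) ` {1..b} \<union> {z}) = carrier G"
      using rc tc gen z_car by (intro genS) auto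
    show "gprod G (map (\<lambda>j. gcomm G (inv (r j)) (inv (inv (t j))) \<otimes> inv (inv (t j))) (rev [1..<b + 1])) \<otimes>
      gprod G (map (\<lambda>j. inv (t j)) [1..<b + 1]) = z" using s1 unfolding xs_def .
    show "gprod G (map (\<lambda>j. gcomm G (inv (r j)) (inv (t j)) \<otimes> inv (t j)) [1..<b + 1]) \<otimes>
      gprod G (map (\<lambda>j. inv (inv (t j))) (rev [1..<b + 1])) = inv z" using s2 unfolding xs_def .
  qed (intro ballI act)
qed

end


lemma center_eq_cent: "group_center G = cent G (carrier G)"
  unfolding group_center_def cent_def by auto

lemma (in group) center_normal: "group_center G \<lhd> G"
proof (rule normalI)
  show "subgroup (group_center G) G" unfolding center_eq_cent by (rule cent_subgroup) auto
  show "\<forall>x\<in>carrier G. group_center G #> x = x <# group_center G"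
    unfolding r_coset_def l_coset_def group_center_def by auto
qed

lemma (in group) comm_in_center:
  assumes cg: "comm_group (G Mod group_center G)" and a: "a \<in> carrier G" and b: "b \<in> carrier G"
  shows "gcomm G a b \<in> group_center G"
proof -
  let ?Z = "group_center G"
  interpret N: normal ?Z G by (rule center_normal)
  have A: "?Z #> a \<in> carrier (G Mod ?Z)" "?Z #> b \<in> carrier (G Mod ?Z)"
    using a b unfolding carrier_FactGroup by auto
  have "(?Z #> a) <#> (?Z #> b) = (?Z #> b) <#> (?Z #> a)"
    using comm_monoid.m_comm[OF comm_group.axioms(1)[OF cg] A] by simp
  then have e: "?Z #> (a \<otimes> b) = ?Z #> (b \<otimes> a)" using a b by (simp add: N.rcos_sum)
  have "a \<otimes> b \<in> ?Z #> (a \<otimes> b)" using a b by (intro rcos_self N.subgroup_axioms) auto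
  then have "a \<otimes> b \<in> ?Z #> (b \<otimes> a)" using e by simp
  then have "(a \<otimes> b) \<otimes> inv (b \<otimes> a) \<in> ?Z"
    using a b by (intro N.rcos_module_imp is_group) auto
  moreover have "gcomm G a b = (a \<otimes> b) \<otimes> inv (b \<otimes> a)"
    using a b by (simp add: gcomm_def inv_mult_group m_assoc)
  ultimately show ?thesis by simp
qed

lemma es_ccg:
  assumes "extra_special G p"
  shows "\<exists>z. ccg G z p"
proof -
  have grp: "group G" and pr: "Factorial_Ring.prime p" and fin: "finite (carrier G)"
    and cZ: "card (group_center G) = p" and cg: "comm_group (G Mod group_center G)"
    using assms unfolding extra_special_def Let_def by auto
  obtain g where g: "g \<in> group_center G" and gg: "generate G {g} = group_center G"
    using assms unfolding extra_special_def Let_def by auto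
  interpret group G by (rule grp)
  have gc: "g \<in> carrier G" and gcent: "\<And>x. x \<in> carrier G \<Longrightarrow> g \<otimes>\<^bsub>G\<^esub> x = x \<otimes>\<^bsub>G\<^esub> g"
    using g unfolding group_center_def by auto
  have "group.ord G g = p" using generate_pow_card[OF gc] gg cZ by simp
  show ?thesis
  proof (intro exI ccg.intro ccg_axioms.intro)
    show "group G" by (rule grp)
    show "g \<in> carrier G" by fact
    show "\<And>x. x \<in> carrier G \<Longrightarrow> g \<otimes>\<^bsub>G\<^esub> x = x \<otimes>\<^bsub>G\<^esub> g" by (rule gcent)
    show "group.ord G g = p" by fact
    show "Factorial_Ring.prime p" by fact
    show "\<And>a b. a \<in> carrier G \<Longrightarrow> b \<in> carrier G \<Longrightarrow> gcomm G a b \<in> generate G {g}"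
      using comm_in_center[OF cg] gg by simp
    show "\<And>x. x \<in> carrier G \<Longrightarrow> \<forall>h\<in>carrier G. x \<otimes>\<^bsub>G\<^esub> h = h \<otimes>\<^bsub>G\<^esub> x \<Longrightarrow> x \<in> generate G {g}"
      using gg unfolding group_center_def by auto
    show "finite (carrier G)" by fact
  qed
qed

theorem theorem2p7:
  fixes G :: "('a, 'c) monoid_scheme" and b p :: nat
  assumes "b \<ge> 2" and "Factorial_Ring.prime p" and "p dvd b + 1"
    and "extra_special G p" and "order G = p ^ (2 * b + 1)"
  shows "\<exists>r1 t1 r2 t2 z. ddks_strong G b p r1 t1 r2 t2 z"
proof -
  obtain z where "ccg G z p" using es_ccg[OF assms(4)] by blast
  then interpret ccg G z p .
  obtain r t where sy: "sympl G z r t b" and gen: "carrier G \<subseteq> generate G (insert z (PP r t b))"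
    using final[OF assms(5)] by blast
  have "ddks_strong G b p r (\<lambda>j. m_inv G (t j)) r (\<lambda>j. m_inv G (t j)) z"
    using verify[OF assms(1) assms(3) sy gen] .
  then show ?thesis by blast
qed


end
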